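(* Let $k$ be a field and $A_k$ a $k$-algebra with a $k$-linear involution $a\mapsto a^*$. Let $E$ be a finite-dimensional $A_k$-module with a nondegenerate $k$-bilinear form $b$ satisfying $b(ax,y)=b(x,a^*y)$ for all $a\in A_k$, $x,y\in E$, where either $b$ is alternating, or $b$ is symmetric and $\mathrm{char}(k)\neq2$. Let $S$ be an $A_k$-submodule of $E$ which is totally isotropic ($b(x,y)=0$ for all $x,y\in S$) and maximal among totally isotropic $A_k$-submodules. Let $S_\perp$ be its orthogonal for $b$, $X=S_\perp/S$, and $b_1$ the nondegenerate form on $X$ induced by $b$. Then: (i) the $A_k$-module $X$ is semisimple, and the only $A_k$-submodule of $X$ totally isotropic for $b_1$ is $0$; (ii) if $b$ is symmetric (and $\mathrm{char}(k)\neq2$), then $b$ is isomorphic to the orthogonal direct sum of $b_1$ and a hyperbolic form of rank $2\dim S$. *)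

theory Defs
  imports Complex_Main
begin

text \<open>The algebra A_k is a type 'a of class ring_1
  together with a k-scalar multiplication sa making it a k-algebra. The module E is a type 'e
  with k-scalar multiplication se and an A_k-action act.\<close>

definition k_algebra :: "('k::field \<Rightarrow> 'a::ring_1 \<Rightarrow> 'a) \<Rightarrow> bool" where
  "k_algebra sa \<longleftrightarrow> vector_space sa \<and>
     (\<forall>c x y. sa c (x * y) = sa c x * y) \<and> (\<forall>c x y. sa c (x * y) = x * sa c y)"

definition algebra_involution :: "('k::field \<Rightarrow> 'a::ring_1 \<Rightarrow> 'a) \<Rightarrow> ('a \<Rightarrow> 'a) \<Rightarrow> bool" where
  "algebra_involution sa invl \<longleftrightarrow>
     (\<forall>c x. invl (sa c x) = sa c (invl x)) \<and> (\<forall>x y. invl (x + y) = invl x + invl y) \<and>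
     (\<forall>x y. invl (x * y) = invl y * invl x) \<and> (\<forall>x. invl (invl x) = x)"

definition algebra_module ::
  "('k::field \<Rightarrow> 'a::ring_1 \<Rightarrow> 'a) \<Rightarrow> ('k \<Rightarrow> 'e::ab_group_add \<Rightarrow> 'e) \<Rightarrow> ('a \<Rightarrow> 'e \<Rightarrow> 'e) \<Rightarrow> bool" where
  "algebra_module sa se act \<longleftrightarrow> vector_space se \<and>
     (\<forall>v. act 1 v = v) \<and> (\<forall>x y v. act (x * y) v = act x (act y v)) \<and>
     (\<forall>x y v. act (x + y) v = act x v + act y v) \<and>
     (\<forall>x v w. act x (v + w) = act x v + act x w) \<and>
     (\<forall>c x v. act (sa c x) v = se c (act x v)) \<and>
     (\<forall>c x v. act x (se c v) = se c (act x v))"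

definition finite_dim :: "('k::field \<Rightarrow> 'e::ab_group_add \<Rightarrow> 'e) \<Rightarrow> bool" where
  "finite_dim se \<longleftrightarrow> (\<exists>B. finite B \<and> module.span se B = UNIV)"

definition bilinear_form :: "('k::field \<Rightarrow> 'e::ab_group_add \<Rightarrow> 'e) \<Rightarrow> ('e \<Rightarrow> 'e \<Rightarrow> 'k) \<Rightarrow> bool" where
  "bilinear_form se b \<longleftrightarrow>
     (\<forall>x y z. b (x + y) z = b x z + b y z) \<and> (\<forall>x y z. b x (y + z) = b x y + b x z) \<and>
     (\<forall>c x y. b (se c x) y = c * b x y) \<and> (\<forall>c x y. b x (se c y) = c * b x y)"

definition nondegenerate :: "('e::ab_group_add \<Rightarrow> 'e \<Rightarrow> 'k::field) \<Rightarrow> bool" where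
  "nondegenerate b \<longleftrightarrow> (\<forall>x. (\<forall>y. b x y = 0) \<longrightarrow> x = 0) \<and> (\<forall>y. (\<forall>x. b x y = 0) \<longrightarrow> y = 0)"

definition alternating :: "('e \<Rightarrow> 'e \<Rightarrow> 'k::field) \<Rightarrow> bool" where
  "alternating b \<longleftrightarrow> (\<forall>x. b x x = 0)"

definition symmetric_form :: "('e \<Rightarrow> 'e \<Rightarrow> 'k::field) \<Rightarrow> bool" where
  "symmetric_form b \<longleftrightarrow> (\<forall>x y. b x y = b y x)"

definition submod :: "('k::field \<Rightarrow> 'e::ab_group_add \<Rightarrow> 'e) \<Rightarrow> ('a \<Rightarrow> 'e \<Rightarrow> 'e) \<Rightarrow> 'e set \<Rightarrow> bool" where
  "submod se act M \<longleftrightarrow> module.subspace se M \<and> (\<forall>a x. x \<in> M \<longrightarrow> act a x \<in> M)"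

definition tot_isotropic :: "('e \<Rightarrow> 'e \<Rightarrow> 'k::field) \<Rightarrow> 'e set \<Rightarrow> bool" where
  "tot_isotropic b M \<longleftrightarrow> (\<forall>x\<in>M. \<forall>y\<in>M. b x y = 0)"

definition orth :: "('e \<Rightarrow> 'e \<Rightarrow> 'k::field) \<Rightarrow> 'e set \<Rightarrow> 'e set" where
  "orth b S = {x. \<forall>y\<in>S. b x y = 0}"

text \<open>Subquotients: for submodules W \<subseteq> V of E, submodules of V/W correspond to submodules M
  with W \<subseteq> M \<subseteq> V (correspondence theorem). M/W is a simple module iff:\<close>
definition simple_subquot ::
  "('k::field \<Rightarrow> 'e::ab_group_add \<Rightarrow> 'e) \<Rightarrow> ('a \<Rightarrow> 'e \<Rightarrow> 'e) \<Rightarrow> 'e set \<Rightarrow> 'e set \<Rightarrow> bool" where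
  "simple_subquot se act W M \<longleftrightarrow> submod se act W \<and> submod se act M \<and> W \<subset> M \<and>
     (\<forall>N. submod se act N \<and> W \<subseteq> N \<and> N \<subseteq> M \<longrightarrow> N = W \<or> N = M)"

text \<open>V/W is semisimple iff it is the sum of its simple submodules, i.e. V is spanned by W
  together with all M (W \<subseteq> M \<subseteq> V) such that M/W is simple.\<close>
definition semisimple_subquot ::
  "('k::field \<Rightarrow> 'e::ab_group_add \<Rightarrow> 'e) \<Rightarrow> ('a \<Rightarrow> 'e \<Rightarrow> 'e) \<Rightarrow> 'e set \<Rightarrow> 'e set \<Rightarrow> bool" where
  "semisimple_subquot se act W V \<longleftrightarrow>
     V = module.span se (W \<union> \<Union>{M. simple_subquot se act W M \<and> M \<subseteq> V})"

text \<open>A hyperbolic family: vectors e_i, f_i (i < m) with b(e_i,e_j) = b(f_i,f_j) = 0 and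
  b(e_i,f_j) = \<delta>_ij; their span carries the hyperbolic form of rank 2m.\<close>
definition hyperbolic_family :: "('e \<Rightarrow> 'e \<Rightarrow> 'k::field) \<Rightarrow> nat \<Rightarrow> (nat \<Rightarrow> 'e) \<Rightarrow> (nat \<Rightarrow> 'e) \<Rightarrow> bool" where
  "hyperbolic_family b m e f \<longleftrightarrow> (\<forall>i<m. \<forall>j<m. b (e i) (e j) = 0 \<and> b (f i) (f j) = 0 \<and>
     b (e i) (f j) = (if i = j then 1 else 0))"

text \<open>(U, b|U) is isometric to (V/W, induced form) via \<psi>: U \<rightarrow> V, i.e. the composite
  U \<rightarrow> V \<rightarrow> V/W is a k-linear bijection preserving the forms.\<close>
definition isometric_to_subquot ::
  "('k::field \<Rightarrow> 'e::ab_group_add \<Rightarrow> 'e) \<Rightarrow> ('e \<Rightarrow> 'e \<Rightarrow> 'k) \<Rightarrow> 'e set \<Rightarrow> 'e set \<Rightarrow> 'e set \<Rightarrow> bool" where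
  "isometric_to_subquot se b U W V \<longleftrightarrow> (\<exists>\<psi>.
     (\<forall>u\<in>U. \<forall>v\<in>U. \<psi> (u + v) = \<psi> u + \<psi> v) \<and> (\<forall>c. \<forall>u\<in>U. \<psi> (se c u) = se c (\<psi> u)) \<and>
     \<psi> ` U \<subseteq> V \<and> (\<forall>u\<in>U. \<psi> u \<in> W \<longrightarrow> u = 0) \<and> (\<forall>x\<in>V. \<exists>u\<in>U. x - \<psi> u \<in> W) \<and>
     (\<forall>u\<in>U. \<forall>v\<in>U. b (\<psi> u) (\<psi> v) = b u v))"

end

theory Submission
  imports Defs
begin

locale bf = vector_space se for se :: "'k::field \<Rightarrow> 'e::ab_group_add \<Rightarrow> 'e" (infixr \<open>*s\<close> 75) +
  fixes b :: "'e \<Rightarrow> 'e \<Rightarrow> 'k"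
  assumes bil: "bilinear_form se b"
begin

lemma badd1: "b (x + y) z = b x z + b y z" and badd2: "b x (y + z) = b x y + b x z"
  and bscale1: "b (c *s x) y = c * b x y" and bscale2: "b x (c *s y) = c * b x y"
  using bil by (auto simp: bilinear_form_def)

lemma bzero1: "b 0 y = 0" and bdiff1: "b (x - x') y = b x y - b x' y"
  and bsum1: "b (sum f A) y = (\<Sum>v\<in>A. b (f v) y)"
proof -
  interpret a: additive "\<lambda>x. b x y" by standard (rule badd1)
  show "b 0 y = 0" by (rule a.zero)
  show "b (x - x') y = b x y - b x' y" by (rule a.diff)
  show "b (sum f A) y = (\<Sum>v\<in>A. b (f v) y)" by (rule a.sum)
qed

lemma bzero2: "b x 0 = 0" and bdiff2: "b x (y - y') = b x y - b x y'"
  and bsum2: "b x (sum f A) = (\<Sum>v\<in>A. b x (f v))"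
proof -
  interpret a: additive "\<lambda>y. b x y" by standard (rule badd2)
  show "b x 0 = 0" by (rule a.zero)
  show "b x (y - y') = b x y - b x y'" by (rule a.diff)
  show "b x (sum f A) = (\<Sum>v\<in>A. b x (f v))" by (rule a.sum)
qed

lemma orth_subspace: "subspace (orth b N)"
  unfolding subspace_def orth_def by (auto simp: bzero1 badd1 bscale1)

lemma orth_span: assumes "\<forall>y\<in>B. b x y = 0" "y \<in> span B" shows "b x y = 0"
proof -
  have "subspace {y. b x y = 0}"
    unfolding subspace_def by (auto simp: bzero2 badd2 bscale2)
  then show ?thesis using span_induct[OF assms(2), of "\<lambda>y. b x y = 0"] assms(1) by blast
qed

lemma dual_exists:
  assumes nd: "\<forall>x. (\<forall>y. b x y = 0) \<longrightarrow> x = 0"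
  and fin: "finite B" and ind: "independent B"
  shows "\<exists>g. \<forall>u\<in>B. \<forall>v\<in>B. b u (g v) = (if u = v then 1 else 0)"
  using fin ind
proof (induction B rule: finite_induct)
  case empty then show ?case by simp
next
  case (insert a F)
  from insert.prems have indF: "independent F" and aF: "a \<notin> span F"
    using insert.hyps(2) by (auto simp: independent_insert)
  obtain g where g: "\<forall>u\<in>F. \<forall>v\<in>F. b u (g v) = (if u = v then 1 else 0)"
    using insert.IH indF by blast
  have "\<exists>y. (\<forall>u\<in>F. b u y = 0) \<and> b a y \<noteq> 0"
  proof (rule ccontr)
    assume H: "\<not> ?thesis"
    define z where "z = a - (\<Sum>v\<in>F. b a (g v) *s v)"
    have "b z y = 0" for y
    proof -
      define y' where "y' = y - (\<Sum>v\<in>F. b v y *s g v)"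
      have "b u y' = 0" if "u \<in> F" for u
      proof -
        have "b u y' = b u y - (\<Sum>v\<in>F. b v y * b u (g v))"
          by (simp add: y'_def bdiff2 bsum2 bscale2)
        also have "(\<Sum>v\<in>F. b v y * b u (g v)) = (\<Sum>v\<in>F. if v = u then b u y else 0)"
          using g that by (intro sum.cong) auto
        also have "\<dots> = b u y" using insert.hyps(1) that by simp
        finally show ?thesis by simp
      qed
      then have "b a y' = 0" using H by blast
      then have "b a y = (\<Sum>v\<in>F. b v y * b a (g v))"
        by (simp add: y'_def bdiff2 bsum2 bscale2)
      then show ?thesis by (simp add: z_def bdiff1 bsum1 bscale1 mult.commute)
    qed
    then have "z = 0" using nd by blast
    then have "a = (\<Sum>v\<in>F. b a (g v) *s v)" by (simp add: z_def)
    moreover have "(\<Sum>v\<in>F. b a (g v) *s v) \<in> span F" by (intro span_sum span_scale span_base)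
    ultimately show False using aF by simp
  qed
  then obtain y where yF: "\<forall>u\<in>F. b u y = 0" and ya: "b a y \<noteq> 0" by blast
  define y0 where "y0 = inverse (b a y) *s y"
  have y0F: "\<forall>u\<in>F. b u y0 = 0" and y0a: "b a y0 = 1" using yF ya by (auto simp: y0_def bscale2)
  define g' where "g' v = (if v = a then y0 else g v - b a (g v) *s y0)" for v
  have "\<forall>u\<in>insert a F. \<forall>v\<in>insert a F. b u (g' v) = (if u = v then 1 else 0)"
    using g y0F y0a insert.hyps(2) by (auto simp: g'_def bdiff2 bscale2)
  then show ?case by blast
qed

end


lemma (in vector_space) span_image_repr:
  assumes "finite I" "x \<in> span (p ` I)"
  shows "\<exists>c. x = (\<Sum>i\<in>I. c i *s p i)"
proof -
  let ?R = "{x. \<exists>c. x = (\<Sum>i\<in>I. c i *s p i)}"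
  have "subspace ?R"
  proof (rule subspaceI)
    show "0 \<in> ?R" by (rule CollectI, rule exI[of _ "\<lambda>_. 0"]) simp
    show "x + y \<in> ?R" if "x \<in> ?R" "y \<in> ?R" for x y
    proof -
      from that obtain c d where "x = (\<Sum>i\<in>I. c i *s p i)" "y = (\<Sum>i\<in>I. d i *s p i)" by auto
      then have "x + y = (\<Sum>i\<in>I. (c i + d i) *s p i)" by (simp add: sum.distrib scale_left_distrib)
      then show ?thesis by (intro CollectI exI[of _ "\<lambda>i. c i + d i"])
    qed
    show "a *s x \<in> ?R" if "x \<in> ?R" for a x
    proof -
      from that obtain c where "x = (\<Sum>i\<in>I. c i *s p i)" by auto
      then have "a *s x = (\<Sum>i\<in>I. (a * c i) *s p i)" by (simp add: scale_sum_right)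
      then show ?thesis by (intro CollectI exI[of _ "\<lambda>i. a * c i"])
    qed
  qed
  moreover have "p ` I \<subseteq> ?R"
  proof
    fix y assume "y \<in> p ` I"
    then obtain j where j: "j \<in> I" "y = p j" by auto
    have "(\<Sum>i\<in>I. (if i = j then 1 else 0) *s p i) = (\<Sum>i\<in>I. if i = j then p i else 0)"
      by (intro sum.cong) auto
    also have "\<dots> = p j" using j assms(1) by simp
    finally show "y \<in> ?R" using j by (intro CollectI exI[of _ "\<lambda>i. if i = j then 1 else 0"]) simp
  qed
  ultimately show ?thesis using span_minimal assms(2) by blast
qed

lemma (in vector_space) span_image2_repr:
  assumes "finite I" "x \<in> span (p ` I \<union> q ` I)"
  shows "\<exists>c d. x = (\<Sum>i\<in>I. c i *s p i) + (\<Sum>i\<in>I. d i *s q i)"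
proof -
  let ?R = "{x. \<exists>c d. x = (\<Sum>i\<in>I. c i *s p i) + (\<Sum>i\<in>I. d i *s q i)}"
  have "subspace ?R"
  proof (rule subspaceI)
    show "0 \<in> ?R" by (rule CollectI, rule exI[of _ "\<lambda>_. 0"], rule exI[of _ "\<lambda>_. 0"]) simp
    show "x + y \<in> ?R" if "x \<in> ?R" "y \<in> ?R" for x y
    proof -
      from that obtain c d c' d' where "x = (\<Sum>i\<in>I. c i *s p i) + (\<Sum>i\<in>I. d i *s q i)"
        "y = (\<Sum>i\<in>I. c' i *s p i) + (\<Sum>i\<in>I. d' i *s q i)" by auto
      then have "x + y = (\<Sum>i\<in>I. (c i + c' i) *s p i) + (\<Sum>i\<in>I. (d i + d' i) *s q i)"
        by (simp add: sum.distrib scale_left_distrib algebra_simps)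
      then show ?thesis by (intro CollectI exI[of _ "\<lambda>i. c i + c' i"] exI[of _ "\<lambda>i. d i + d' i"])
    qed
    show "a *s x \<in> ?R" if "x \<in> ?R" for a x
    proof -
      from that obtain c d where "x = (\<Sum>i\<in>I. c i *s p i) + (\<Sum>i\<in>I. d i *s q i)" by auto
      then have "a *s x = (\<Sum>i\<in>I. (a * c i) *s p i) + (\<Sum>i\<in>I. (a * d i) *s q i)"
        by (simp add: scale_sum_right scale_right_distrib)
      then show ?thesis by (intro CollectI exI[of _ "\<lambda>i. a * c i"] exI[of _ "\<lambda>i. a * d i"])
    qed
  qed
  moreover have "p ` I \<union> q ` I \<subseteq> ?R"
  proof
    fix y assume "y \<in> p ` I \<union> q ` I"
    then consider j where "j \<in> I" "y = p j" | j where "j \<in> I" "y = q j" by auto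
    then show "y \<in> ?R"
    proof cases
      case 1
      have "(\<Sum>i\<in>I. (if i = j then 1 else 0) *s p i) = (\<Sum>i\<in>I. if i = j then p i else 0)"
        by (intro sum.cong) auto
      also have "\<dots> = p j" using 1 assms(1) by simp
      finally have "y = (\<Sum>i\<in>I. (if i = j then 1 else 0) *s p i) + (\<Sum>i\<in>I. 0 *s q i)"
        using 1 by simp
      then show ?thesis by (intro CollectI exI[of _ "\<lambda>i. if i = j then 1 else 0"] exI[of _ "\<lambda>i. 0"])
    next
      case 2
      have "(\<Sum>i\<in>I. (if i = j then 1 else 0) *s q i) = (\<Sum>i\<in>I. if i = j then q i else 0)"
        by (intro sum.cong) auto
      also have "\<dots> = q j" using 2 assms(1) by simp
      finally have "y = (\<Sum>i\<in>I. 0 *s p i) + (\<Sum>i\<in>I. (if i = j then 1 else 0) *s q i)"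
        using 2 by simp
      then show ?thesis by (intro CollectI exI[of _ "\<lambda>i. 0"] exI[of _ "\<lambda>i. if i = j then 1 else 0"])
    qed
  qed
  ultimately show ?thesis using span_minimal assms(2) by blast
qed

locale fbf = bf se b + finite_dimensional_vector_space se Basis
  for se :: "'k::field \<Rightarrow> 'e::ab_group_add \<Rightarrow> 'e" (infixr \<open>*s\<close> 75) and b and Basis +
  assumes nondeg: "nondegenerate b"
begin

lemma orth_dim:
  assumes N: "subspace N"
  shows "dim (orth b N) + dim N = dim (UNIV :: 'e set)"
proof -
  obtain B where B: "B \<subseteq> N" "independent B" "N \<subseteq> span B" "card B = dim N"
    by (rule basis_exists)
  have fB: "finite B" using B(2) finiteI_independent by blast
  have NB: "N = span B" using B N span_minimal[of B N] by auto
  interpret flip: bf se "\<lambda>x y. b y x"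
    by unfold_locales (use bil in \<open>auto simp: bilinear_form_def\<close>)
  have nd: "\<forall>x. (\<forall>y. b y x = 0) \<longrightarrow> x = 0" using nondeg by (auto simp: nondegenerate_def)
  obtain h where h: "\<forall>u\<in>B. \<forall>v\<in>B. b (h v) u = (if u = v then 1 else 0)"
    using flip.dual_exists[OF nd fB B(2)] by blast
  let ?A = "orth b N" and ?C = "span (h ` B)"
  have dsum: "\<And>c u. u \<in> B \<Longrightarrow> (\<Sum>v\<in>B. c v * b (h v) u) = c u"
  proof -
    fix c u assume u: "u \<in> B"
    have "(\<Sum>v\<in>B. c v * b (h v) u) = (\<Sum>v\<in>B. if v = u then c u else 0)"
      using h u by (intro sum.cong) auto
    also have "\<dots> = c u" using fB u by simp
    finally show "(\<Sum>v\<in>B. c v * b (h v) u) = c u" .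
  qed
  have sumU: "{x + y |x y. x \<in> ?A \<and> y \<in> ?C} = UNIV"
  proof (intro set_eqI iffI)
    fix x :: 'e
    define c0 where "c0 = (\<Sum>v\<in>B. b x v *s h v)"
    have c0C: "c0 \<in> ?C" unfolding c0_def by (intro span_sum span_scale span_base) auto
    have "\<forall>u\<in>B. b (x - c0) u = 0"
      using dsum by (simp add: c0_def bdiff1 bsum1 bscale1)
    then have "x - c0 \<in> ?A" using orth_span NB by (auto simp: orth_def)
    then show "x \<in> {x + y |x y. x \<in> ?A \<and> y \<in> ?C}" using c0C by force
  qed simp
  have int0: "?A \<inter> ?C = {0}"
  proof (intro set_eqI iffI)
    fix z assume z: "z \<in> ?A \<inter> ?C"
    then obtain c where c: "z = (\<Sum>v\<in>B. c v *s h v)" using span_image_repr[OF fB] by blast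
    have "\<forall>u\<in>B. c u = 0"
    proof
      fix u assume u: "u \<in> B"
      have "b z u = 0" using z u B(1) by (auto simp: orth_def)
      moreover have "b z u = c u" using dsum[OF u] by (simp add: c bsum1 bscale1)
      ultimately show "c u = 0" by simp
    qed
    then show "z \<in> {0}" by (simp add: c)
  next
    fix z :: 'e assume "z \<in> {0}"
    then show "z \<in> ?A \<inter> ?C" using subspace_0[OF orth_subspace] span_zero by auto
  qed
  have injh: "inj_on h B"
  proof (rule inj_onI)
    fix u v assume uv: "u \<in> B" "v \<in> B" "h u = h v"
    then have "b (h u) u = b (h v) u" by simp
    moreover have "b (h u) u = 1" using h uv(1) by simp
    moreover have "b (h v) u = (if u = v then 1 else 0)" using h uv(1,2) by simp
    ultimately show "u = v" by (cases "u = v") simp_all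
  qed
  have indC: "independent (h ` B)"
  proof -
    have "\<forall>c. (\<Sum>v\<in>h ` B. c v *s v) = 0 \<longrightarrow> (\<forall>w\<in>h ` B. c w = 0)"
    proof (intro allI impI ballI)
      fix c w assume s: "(\<Sum>v\<in>h ` B. c v *s v) = 0" and w: "w \<in> h ` B"
      then obtain u where u: "u \<in> B" "w = h u" by auto
      have "(\<Sum>v\<in>B. c (h v) *s h v) = 0" using s by (simp add: sum.reindex[OF injh])
      then have "b (\<Sum>v\<in>B. c (h v) *s h v) u = 0" by (simp add: bzero1)
      then have "c (h u) = 0" using dsum[OF u(1), of "\<lambda>v. c (h v)"] by (simp add: bsum1 bscale1)
      then show "c w = 0" using u by simp
    qed
    moreover have "finite (h ` B)" using fB by simp
    ultimately show ?thesis by (simp only: independent_explicit)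
  qed
  have dimC: "dim ?C = card B"
    using dim_eq_card_independent[OF indC] card_image[OF injh] by simp
  have "dim (UNIV::'e set) + dim (?A \<inter> ?C) = dim ?A + dim ?C"
    using dim_sums_Int[OF orth_subspace[of N] subspace_span[of "h ` B"]] unfolding sumU by simp
  moreover have "dim {0::'e} = 0" by simp
  ultimately show ?thesis using int0 dimC B(4) by simp
qed

end


locale mainloc = fbf se b Basis
  for se :: "'k::field \<Rightarrow> 'e::ab_group_add \<Rightarrow> 'e" (infixr \<open>*s\<close> 75) and b Basis +
  fixes act :: "'a \<Rightarrow> 'e \<Rightarrow> 'e" and invl :: "'a \<Rightarrow> 'a" and S :: "'e set"
  assumes act_add: "act a (v + w) = act a v + act a w"
  and act_scale: "act a (c *s v) = c *s act a v"
  and adj: "b (act a x) y = b x (act (invl a) y)"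
  and brefl: "b x y = 0 \<longleftrightarrow> b y x = 0"
  and S_sub: "submod se act S" and S_iso: "tot_isotropic b S"
  and S_max: "\<forall>T. submod se act T \<and> tot_isotropic b T \<and> S \<subseteq> T \<longrightarrow> T = S"
begin

lemma act0: "act a 0 = 0"
proof -
  interpret a: additive "act a" by standard (rule act_add)
  show ?thesis by (rule a.zero)
qed

lemma span_act:
  assumes "\<forall>a. \<forall>x\<in>X. act a x \<in> X" "x \<in> span X"
  shows "act a x \<in> span X"
proof -
  have "subspace {x. act a x \<in> span X}"
    unfolding subspace_def by (auto simp: act0 act_add act_scale span_zero span_add span_scale)
  then show ?thesis using span_induct[OF assms(2), of "\<lambda>x. act a x \<in> span X"] assms(1) span_base
    by blast
qed

lemma orth_submod: "submod se act N \<Longrightarrow> submod se act (orth b N)"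
  unfolding submod_def using orth_subspace by (auto simp: orth_def adj)

lemma S_subspace: "subspace S" using S_sub by (simp add: submod_def)

lemma S_sub_orth: "S \<subseteq> orth b S" using S_iso by (auto simp: orth_def tot_isotropic_def)

lemma orth_antimono: "A \<subseteq> B \<Longrightarrow> orth b B \<subseteq> orth b A" by (auto simp: orth_def)

lemma complement:
  assumes N: "submod se act N" "S \<subseteq> N" "N \<subseteq> orth b S"
  shows "N \<inter> orth b N = S" "{x + y |x y. x \<in> N \<and> y \<in> orth b N} = orth b S"
proof -
  have sN: "subspace N" using N(1) by (simp add: submod_def)
  have Sorth: "S \<subseteq> orth b N"
  proof
    fix x assume x: "x \<in> S"
    have "b x y = 0" if "y \<in> N" for y
    proof -
      have "b y x = 0" using N(3) that x by (auto simp: orth_def)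
      then show ?thesis using brefl by blast
    qed
    then show "x \<in> orth b N" by (simp add: orth_def)
  qed
  show 1: "N \<inter> orth b N = S"
  proof -
    have "submod se act (N \<inter> orth b N)" using N(1) orth_submod[OF N(1)]
      by (auto simp: submod_def intro: subspace_inter)
    moreover have "tot_isotropic b (N \<inter> orth b N)" by (auto simp: tot_isotropic_def orth_def)
    moreover have "S \<subseteq> N \<inter> orth b N" using N(2) Sorth by auto
    ultimately show ?thesis using S_max by blast
  qed
  let ?P = "{x + y |x y. x \<in> N \<and> y \<in> orth b N}"
  have sub: "?P \<subseteq> orth b S"
  proof
    fix z assume "z \<in> ?P"
    then obtain x y where xy: "z = x + y" "x \<in> N" "y \<in> orth b N" by auto
    have "y \<in> orth b S" using xy(3) orth_antimono[OF N(2)] by auto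
    then show "z \<in> orth b S" using xy N(3) subspace_add[OF orth_subspace] by auto
  qed
  have subP: "subspace ?P" using subspace_sums[OF sN orth_subspace] .
  have "dim ?P + dim S = dim N + dim (orth b N)"
    using dim_sums_Int[OF sN orth_subspace[of N]] 1 by simp
  moreover have "dim (orth b N) + dim N = dim (UNIV::'e set)" by (rule orth_dim[OF sN])
  moreover have "dim (orth b S) + dim S = dim (UNIV::'e set)" by (rule orth_dim[OF S_subspace])
  ultimately have "dim (orth b S) \<le> dim ?P" by linarith
  then show "?P = orth b S" using subspace_dim_equal[OF subP orth_subspace sub] by simp
qed

lemma semisimple: "semisimple_subquot se act S (orth b S)"
proof -
  let ?F = "\<Union>{M. simple_subquot se act S M \<and> M \<subseteq> orth b S}"
  let ?T = "span (S \<union> ?F)"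
  have Tsub: "?T \<subseteq> orth b S"
  proof (rule span_minimal)
    show "S \<union> ?F \<subseteq> orth b S" using S_sub_orth by auto
  qed (rule orth_subspace)
  have cl: "\<forall>a. \<forall>x\<in>S \<union> ?F. act a x \<in> S \<union> ?F"
  proof (intro allI ballI)
    fix a x assume "x \<in> S \<union> ?F"
    then show "act a x \<in> S \<union> ?F"
    proof
      assume "x \<in> S" then show ?thesis using S_sub by (simp add: submod_def)
    next
      assume "x \<in> ?F"
      then obtain M where M: "simple_subquot se act S M" "M \<subseteq> orth b S" "x \<in> M" by blast
      then have "act a x \<in> M" by (simp add: simple_subquot_def submod_def)
      then have "act a x \<in> ?F" using M(1,2) by blast
      then show ?thesis by (rule UnI2)
    qed
  qed
  have Tmod: "submod se act ?T"
    unfolding submod_def using span_act[OF cl] by auto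
  have ST: "S \<subseteq> ?T" using span_base by auto
  have "orth b S = ?T"
  proof (rule ccontr)
    assume ne: "orth b S \<noteq> ?T"
    then obtain x where x: "x \<in> orth b S" "x \<notin> ?T" using Tsub by auto
    let ?C = "orth b ?T"
    note cmp = complement[OF Tmod ST Tsub]
    have "x \<in> {x + y |x y. x \<in> ?T \<and> y \<in> ?C}" using cmp(2) x(1) by simp
    then obtain t c where tc: "t \<in> ?T" "c \<in> ?C" "x = t + c" by blast
    have cS: "c \<notin> S"
    proof
      assume "c \<in> S"
      then have "t + c \<in> ?T" using tc(1) ST span_add by blast
      then show False using x tc by simp
    qed
    have Cmod: "submod se act ?C" by (rule orth_submod[OF Tmod])
    have SC: "S \<subseteq> ?C" using cmp(1) by auto
    have CS: "?C \<subseteq> orth b S" using orth_antimono[OF ST] .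
    define P where "P d \<longleftrightarrow> (\<exists>M. submod se act M \<and> S \<subset> M \<and> M \<subseteq> ?C \<and> dim M = d)" for d
    have "S \<subset> ?C" using SC tc(2) cS by blast
    then have "P (dim ?C)" unfolding P_def using Cmod by (intro exI[of _ ?C]) simp
    then have "P (LEAST d. P d)" by (rule LeastI)
    then obtain M where M: "submod se act M" "S \<subset> M" "M \<subseteq> ?C" "dim M = (LEAST d. P d)"
      unfolding P_def by blast
    have simple: "simple_subquot se act S M"
      unfolding simple_subquot_def
    proof (intro conjI allI impI)
      fix N assume N: "submod se act N \<and> S \<subseteq> N \<and> N \<subseteq> M"
      show "N = S \<or> N = M"
      proof (rule ccontr)
        assume "\<not> (N = S \<or> N = M)"
        then have NM: "S \<subset> N" "N \<subset> M" using N by auto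
        have "span N = N" "span M = M" using N M(1) span_eq_iff by (simp_all add: submod_def)
        then have "span N \<subset> span M" using NM(2) by (simp only:)
        then have "dim N < dim M" by (rule dim_psubset)
        moreover have "N \<subseteq> ?C" using NM(2) M(3) by blast
        then have "P (dim N)" unfolding P_def using N NM(1) by (intro exI[of _ N]) simp
        then have "(LEAST d. P d) \<le> dim N" by (rule Least_le)
        ultimately show False using M(4) by simp
      qed
    qed (simp_all only: S_sub M(1) M(2))
    have "M \<subseteq> orth b S" using M(3) CS by auto
    then have MF: "M \<subseteq> ?F" using simple by (intro Union_upper) simp
    have "M \<subseteq> ?T"
    proof
      fix y assume "y \<in> M"
      then have "y \<in> S \<union> ?F" using MF by blast
      then show "y \<in> ?T" by (rule span_base)
    qed
    then have "M \<subseteq> S" using M(3) cmp(1) by auto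
    then show False using M(2) by auto
  qed
  then show ?thesis unfolding semisimple_subquot_def .
qed


lemma part1b: "\<forall>M. submod se act M \<and> S \<subseteq> M \<and> M \<subseteq> orth b S \<and> tot_isotropic b M \<longrightarrow> M = S"
  using S_max by blast

lemma part2:
  assumes sym: "symmetric_form b" and two: "(2::'k) \<noteq> 0 \<or> alternating b"
  shows "\<exists>U e f. subspace U \<and> hyperbolic_family b (dim S) e f \<and>
              (let H = span (e ` {..<dim S} \<union> f ` {..<dim S})
               in U \<inter> H = {0} \<and> (\<forall>x. \<exists>u\<in>U. \<exists>h\<in>H. x = u + h) \<and>
                  (\<forall>u\<in>U. \<forall>h\<in>H. b u h = 0)) \<and>
              isometric_to_subquot se b U S (orth b S)"
proof -
  have bs: "b x y = b y x" for x y using sym by (simp add: symmetric_form_def)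
  obtain m where m: "m = dim S" by simp
  obtain Bs where Bs: "Bs \<subseteq> S" "independent Bs" "S \<subseteq> span Bs" "card Bs = dim S"
    by (rule basis_exists)
  have fBs: "finite Bs" using Bs(2) finiteI_independent by blast
  obtain \<phi> where \<phi>: "bij_betw \<phi> {..<m} Bs"
    using ex_bij_betw_nat_finite[OF fBs] Bs(4) m by (auto simp: lessThan_atLeast0)
  have inj\<phi>: "inj_on \<phi> {..<m}" and im\<phi>: "\<phi> ` {..<m} = Bs"
    using \<phi> by (auto simp: bij_betw_def)
  have nd: "\<forall>x. (\<forall>y. b x y = 0) \<longrightarrow> x = 0" using nondeg by (auto simp: nondegenerate_def)
  obtain g where g: "\<forall>u\<in>Bs. \<forall>v\<in>Bs. b u (g v) = (if u = v then 1 else 0)"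
    using dual_exists[OF nd fBs Bs(2)] by blast
  define e where "e i = \<phi> i" for i
  define gi where "gi i = g (\<phi> i)" for i
  have eS: "e i \<in> S" if "i < m" for i using that im\<phi> Bs(1) by (auto simp: e_def)
  have ee: "b (e i) (e j) = 0" if "i < m" "j < m" for i j
    using eS[OF that(1)] eS[OF that(2)] S_iso by (auto simp: tot_isotropic_def)
  have eg: "b (e i) (gi j) = (if i = j then 1 else 0)" if "i < m" "j < m" for i j
  proof -
    have "\<phi> i \<in> Bs" "\<phi> j \<in> Bs" using that im\<phi> by auto
    then have "b (e i) (gi j) = (if \<phi> i = \<phi> j then 1 else 0)" using g by (simp add: e_def gi_def)
    also have "(\<phi> i = \<phi> j) = (i = j)" using inj\<phi> that by (auto dest: inj_onD)
    finally show ?thesis .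
  qed
  have ge: "b (gi i) (e l) = (if l = i then 1 else 0)" if "i < m" "l < m" for i l
    using eg[OF that(2,1)] bs by simp
  have dl: "(\<Sum>l<m. d l * (if l = j then 1 else 0)) = d j" if "j < m" for d :: "nat \<Rightarrow> 'k" and j
  proof -
    have "(\<Sum>l<m. d l * (if l = j then 1 else 0)) = (\<Sum>l<m. if l = j then d j else 0)"
      by (intro sum.cong) auto
    also have "\<dots> = d j" using that by simp
    finally show ?thesis .
  qed
  define c where "c l j = (if l < j then - b (gi l) (gi j) else if l = j then - b (gi j) (gi j) / 2 else 0)"
    for l j
  define f where "f j = gi j + (\<Sum>l<m. c l j *s e l)" for j
  have ef: "b (e i) (f j) = (if i = j then 1 else 0)" if "i < m" "j < m" for i j
  proof -
    have "(\<Sum>l<m. c l j * b (e i) (e l)) = 0" using ee[OF that(1)] by (intro sum.neutral) auto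
    then show ?thesis using eg[OF that] by (simp add: f_def badd2 bsum2 bscale2)
  qed
  have fe: "b (f j) (e i) = (if i = j then 1 else 0)" if "i < m" "j < m" for i j
    using ef[OF that] bs by simp
  have gf: "b (gi i) (f j) = b (gi i) (gi j) + c i j" if "i < m" "j < m" for i j
  proof -
    have "(\<Sum>l<m. c l j * b (gi i) (e l)) = (\<Sum>l<m. c l j * (if l = i then 1 else 0))"
      using ge[OF that(1)] by (intro sum.cong) auto
    also have "\<dots> = c i j" using dl[OF that(1)] .
    finally show ?thesis by (simp add: f_def badd2 bsum2 bscale2)
  qed
  have ff: "b (f i) (f j) = 0" if "i < m" "j < m" for i j
  proof -
    have "(\<Sum>l<m. c l i * b (e l) (f j)) = (\<Sum>l<m. c l i * (if l = j then 1 else 0))"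
      using ef[OF _ that(2)] by (intro sum.cong) auto
    also have "\<dots> = c j i" using dl[OF that(2)] .
    finally have "b (f i) (f j) = b (gi i) (gi j) + c i j + c j i"
      using gf[OF that] by (simp add: f_def[of i] badd1 bsum1 bscale1)
    moreover have "b (gi i) (gi j) + c i j + c j i = 0"
    proof (cases "i < j")
      case True then show ?thesis by (simp add: c_def)
    next
      case False
      show ?thesis
      proof (cases "i = j")
        case True
        show ?thesis using two
        proof
          assume "(2::'k) \<noteq> 0"
          then show ?thesis using True by (simp add: c_def field_simps)
        next
          assume "alternating b"
          then show ?thesis using True by (simp add: c_def alternating_def)
        qed
      next
        case False
        then show ?thesis using \<open>\<not> i < j\<close> bs[of "gi i" "gi j"] by (simp add: c_def)
      qed
    qed
    ultimately show ?thesis by simp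
  qed
  have hyp: "hyperbolic_family b m e f"
    unfolding hyperbolic_family_def using ee ff ef by auto
  define H where "H = span (e ` {..<m} \<union> f ` {..<m})"
  define U where "U = orth b H"
  have eH: "e i \<in> H" if "i < m" for i using that by (auto simp: H_def intro: span_base)
  have fH: "f i \<in> H" if "i < m" for i using that by (auto simp: H_def intro: span_base)
  define hx where "hx x = (\<Sum>i<m. b x (f i) *s e i) + (\<Sum>i<m. b x (e i) *s f i)" for x
  have hxH: "hx x \<in> H" for x
    unfolding hx_def H_def by (intro span_add span_sum span_scale span_base) auto
  have xU: "x - hx x \<in> U" for x
  proof -
    have "b (x - hx x) y = 0" if "y \<in> e ` {..<m} \<union> f ` {..<m}" for y
    proof -
      from that consider j where "j < m" "y = e j" | j where "j < m" "y = f j" by auto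
      then show ?thesis
      proof cases
        case 1
        have s1: "(\<Sum>i<m. b x (f i) * b (e i) (e j)) = 0" using ee[OF _ 1(1)] by (intro sum.neutral) auto
        have "(\<Sum>i<m. b x (e i) * b (f i) (e j)) = (\<Sum>i<m. b x (e i) * (if i = j then 1 else 0))"
          using fe[OF 1(1)] by (intro sum.cong) auto
        also have "\<dots> = b x (e j)" using dl[OF 1(1)] .
        finally show ?thesis using s1 1(2) by (simp add: hx_def bdiff1 badd1 bsum1 bscale1)
      next
        case 2
        have s1: "(\<Sum>i<m. b x (e i) * b (f i) (f j)) = 0" using ff[OF _ 2(1)] by (intro sum.neutral) auto
        have "(\<Sum>i<m. b x (f i) * b (e i) (f j)) = (\<Sum>i<m. b x (f i) * (if i = j then 1 else 0))"
          using ef[OF _ 2(1)] by (intro sum.cong) auto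
        also have "\<dots> = b x (f j)" using dl[OF 2(1)] .
        finally show ?thesis using s1 2(2) by (simp add: hx_def bdiff1 badd1 bsum1 bscale1)
      qed
    qed
    then show ?thesis unfolding U_def H_def orth_def using orth_span by blast
  qed
  have UH0: "U \<inter> H = {0}"
  proof (intro set_eqI iffI)
    fix h assume h: "h \<in> U \<inter> H"
    then obtain a d where ad: "h = (\<Sum>i<m. a i *s e i) + (\<Sum>i<m. d i *s f i)"
      using span_image2_repr[of "{..<m}" h e f] by (auto simp: H_def)
    have "a j = 0 \<and> d j = 0" if j: "j < m" for j
    proof -
      have "(\<Sum>i<m. a i * b (e i) (f j)) = (\<Sum>i<m. a i * (if i = j then 1 else 0))"
        using ef[OF _ j] by (intro sum.cong) auto
      also have "\<dots> = a j" using dl[OF j] .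
      finally have 1: "(\<Sum>i<m. a i * b (e i) (f j)) = a j" .
      have 2: "(\<Sum>i<m. d i * b (f i) (f j)) = 0" using ff[OF _ j] by (intro sum.neutral) auto
      have "(\<Sum>i<m. d i * b (f i) (e j)) = (\<Sum>i<m. d i * (if i = j then 1 else 0))"
        using fe[OF j] by (intro sum.cong) auto
      also have "\<dots> = d j" using dl[OF j] .
      finally have 3: "(\<Sum>i<m. d i * b (f i) (e j)) = d j" .
      have 4: "(\<Sum>i<m. a i * b (e i) (e j)) = 0" using ee[OF _ j] by (intro sum.neutral) auto
      have "b h (f j) = 0" "b h (e j) = 0" using h fH[OF j] eH[OF j] by (auto simp: U_def orth_def)
      then show ?thesis using 1 2 3 4 by (simp add: ad badd1 bsum1 bscale1)
    qed
    then show "h \<in> {0}" by (simp add: ad)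
  next
    fix h :: 'e assume "h \<in> {0}"
    then show "h \<in> U \<inter> H" by (simp add: U_def H_def subspace_0[OF orth_subspace] span_zero)
  qed
  have SH: "S \<subseteq> H"
  proof -
    have "Bs \<subseteq> H" using im\<phi> eH by (auto simp: e_def)
    then have "span Bs \<subseteq> H" using span_minimal[of Bs H] by (simp add: H_def)
    then show ?thesis using Bs(3) by auto
  qed
  have iso: "isometric_to_subquot se b U S (orth b S)"
    unfolding isometric_to_subquot_def
  proof (rule exI[of _ id], intro conjI ballI allI impI)
    show "id ` U \<subseteq> orth b S" using SH by (auto simp: U_def orth_def)
    show "u = 0" if "u \<in> U" "id u \<in> S" for u using that SH UH0 by auto
    fix x assume x: "x \<in> orth b S"
    have "(\<Sum>i<m. b x (e i) *s f i) = 0" using x eS by (intro sum.neutral) (auto simp: orth_def)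
    then have "hx x = (\<Sum>i<m. b x (f i) *s e i)" by (simp add: hx_def)
    also have "\<dots> \<in> S" using eS by (intro subspace_sum[OF S_subspace] subspace_scale[OF S_subspace]) auto
    finally have "x - id (x - hx x) \<in> S" by simp
    then show "\<exists>u\<in>U. x - id u \<in> S" using xU by blast
  qed simp_all
  have "subspace U" unfolding U_def by (rule orth_subspace)
  moreover have "U \<inter> H = {0} \<and> (\<forall>x. \<exists>u\<in>U. \<exists>h\<in>H. x = u + h) \<and> (\<forall>u\<in>U. \<forall>h\<in>H. b u h = 0)"
  proof (intro conjI allI)
    show "U \<inter> H = {0}" by (rule UH0)
    fix x show "\<exists>u\<in>U. \<exists>h\<in>H. x = u + h"
      using xU hxH by (intro bexI[of _ "x - hx x"] bexI[of _ "hx x"]) auto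
  next
    show "\<forall>u\<in>U. \<forall>h\<in>H. b u h = 0" by (auto simp: U_def orth_def)
  qed
  ultimately show ?thesis using hyp iso unfolding m[symmetric] Let_def H_def by blast
qed

end

theorem lemma4p2p4:
  fixes sa :: "'k::field \<Rightarrow> 'a::ring_1 \<Rightarrow> 'a"
    and invl :: "'a \<Rightarrow> 'a"
    and se :: "'k \<Rightarrow> 'e::ab_group_add \<Rightarrow> 'e"
    and act :: "'a \<Rightarrow> 'e \<Rightarrow> 'e"
    and b :: "'e \<Rightarrow> 'e \<Rightarrow> 'k"
    and S :: "'e set"
  assumes alg: "k_algebra sa"
    and invol: "algebra_involution sa invl"
    and modl: "algebra_module sa se act"
    and fin: "finite_dim se"
    and bil: "bilinear_form se b"
    and nondeg: "nondegenerate b"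
    and adj: "\<forall>a x y. b (act a x) y = b x (act (invl a) y)"
    and btype: "alternating b \<or> (symmetric_form b \<and> (2::'k) \<noteq> 0)"
    and S_sub: "submod se act S"
    and S_iso: "tot_isotropic b S"
    and S_max: "\<forall>T. submod se act T \<and> tot_isotropic b T \<and> S \<subseteq> T \<longrightarrow> T = S"
  shows "(semisimple_subquot se act S (orth b S) \<and>
          (\<forall>M. submod se act M \<and> S \<subseteq> M \<and> M \<subseteq> orth b S \<and> tot_isotropic b M \<longrightarrow> M = S)) \<and>
         (symmetric_form b \<longrightarrow>
           (\<exists>U e f. module.subspace se U \<and>
              hyperbolic_family b (vector_space.dim se S) e f \<and>
              (let H = module.span se (e ` {..<vector_space.dim se S} \<union> f ` {..<vector_space.dim se S})
               in U \<inter> H = {0} \<and> (\<forall>x. \<exists>u\<in>U. \<exists>h\<in>H. x = u + h) \<and>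
                  (\<forall>u\<in>U. \<forall>h\<in>H. b u h = 0)) \<and>
              isometric_to_subquot se b U S (orth b S)))"
proof -
  have vs: "vector_space se" and actadd: "\<And>a v w. act a (v + w) = act a v + act a w"
    and actsc: "\<And>a c v. act a (se c v) = se c (act a v)"
    using modl by (auto simp: algebra_module_def)
  interpret vs: vector_space se by (rule vs)
  obtain B0 where B0: "finite B0" "vs.span B0 = UNIV" using fin by (auto simp: finite_dim_def)
  obtain Bas where Bas: "vs.independent Bas" "UNIV \<subseteq> vs.span Bas"
    using vs.basis_exists[of UNIV] by blast
  have fBas: "finite Bas" using vs.independent_span_bound[OF B0(1) Bas(1)] B0(2) by auto
  interpret B: bf se b by unfold_locales (rule bil)
  have brefl: "b x y = 0 \<longleftrightarrow> b y x = 0" for x y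
    using btype
  proof
    assume alt: "alternating b"
    have "b (x + y) (x + y) = b x x + b x y + (b y x + b y y)" by (simp add: B.badd1 B.badd2)
    then have "b x y = - b y x" using alt by (simp add: alternating_def add_eq_0_iff)
    then show ?thesis by auto
  next
    assume "symmetric_form b \<and> (2::'k) \<noteq> 0"
    then show ?thesis by (simp add: symmetric_form_def)
  qed
  have spanB: "vs.span Bas = UNIV" using Bas(2) by auto
  interpret M: mainloc se b Bas act invl S
  proof (unfold_locales)
    show "finite Bas" by (rule fBas)
    show "vs.independent Bas" by (rule Bas(1))
    show "vs.span Bas = UNIV" by (rule spanB)
    show "nondegenerate b" by (rule nondeg)
    show "\<And>a v w. act a (v + w) = act a v + act a w" by (rule actadd)
    show "\<And>a c v. act a (se c v) = se c (act a v)" by (rule actsc)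
    show "\<And>a x y. b (act a x) y = b x (act (invl a) y)" using adj by blast
    show "\<And>x y. (b x y = 0) = (b y x = 0)" by (rule brefl)
    show "submod se act S" by (rule S_sub)
    show "tot_isotropic b S" by (rule S_iso)
    show "\<forall>T. submod se act T \<and> tot_isotropic b T \<and> S \<subseteq> T \<longrightarrow> T = S" by (rule S_max)
  qed
  have two: "(2::'k) \<noteq> 0 \<or> alternating b" using btype by auto
  show ?thesis using M.semisimple M.part1b M.part2[OF _ two] by blast
qed

end
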